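(* Let $N$ be a finite nonempty set, $p\notin N$, $N'=N\cup\{p\}$, and let $\mathscr{B}$ be any minimal balanced collection on $N'$. Then $\mathscr{B}$ is obtained from minimal balanced collections on $N$ by one of the following four constructions: (1) there are a minimal balanced collection $\mathscr{C}=\{S_1,\dots,S_k\}$ on $N$ with balancing weights $\lambda$ and $I\subseteq[k]$ with $\lambda_I=1$ such that $\mathscr{B}=\{S_i\cup\{p\}\mid i\in I\}\cup\{S_i\mid i\notin I\}$; (2) there are such $\mathscr{C},\lambda$ and $I\subseteq[k]$ with $\lambda_I<1$ such that $\mathscr{B}=\{S_i\cup\{p\}\mid i\in I\}\cup\{S_i\mid i\notin I\}\cup\{\{p\}\}$; (3) there are such $\mathscr{C},\lambda$, $I\subseteq[k]$ and $\delta\in[k]\setminus I$ with $1>\lambda_I>1-\lambda_{S_\delta}$ such that $\mathscr{B}=\{S_i\cup\{p\}\mid i\in I\}\cup\{S_i\mid i\notin I\}\cup\{S_\delta\cup\{p\}\}$; (4) there are two distinct minimal balanced collections $\mathscr{C}^1,\mathscr{C}^2$ on $N$ whose union $\mathscr{C}=\{S_1,\dots,S_k\}$ has incidence matrix $A^{\mathscr{C}}$ of rank $k-1$, and $I\subseteq[k]$ with $\mu_I\neq\nu_I$ and $t^I=(1-\mu_I)/(\nu_I-\mu_I)\in\,]0,1[$, such that $\mathscr{B}=\{S_i\cup\{p\}\mid i\in I\}\cup\{S_i\mid i\notin I\}$ (here $\mu,\nu$ are the balancing weights of $\mathscr{C}^1,\mathscr{C}^2$ extended by $0$ to $\mathscr{C}$).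 Consequently, applying all four constructions to all minimal balanced collections on $N$ (and all pairs of them) yields exactly the set of minimal balanced collections on $N'$.
   Context: For $T\subseteq N$, $\mathbf{1}^T\in\mathbb{R}^N$ denotes the characteristic vector of $T$. A collection $\mathscr{B}$ of nonempty subsets of a finite set $N$ is balanced if there exist positive weights $(\lambda_S)_{S\in\mathscr{B}}$ (balancing weights) with $\sum_{S\in\mathscr{B}}\lambda_S\mathbf{1}^S=\mathbf{1}^N$. A balanced collection is minimal if it contains no balanced proper subcollection; equivalently, its system of balancing weights is unique. For a collection $\mathscr{C}=\{S_1,\dots,S_k\}$, $A^{\mathscr{C}}$ is the $|N|\times k$ matrix with columns $\mathbf{1}^{S_1},\dots,\mathbf{1}^{S_k}$; for weights $w$ and $I\subseteq[k]=\{1,\dots,k\}$, $w_I=\sum_{i\in I}w_{S_i}$. *)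

theory Defs
  imports Main "HOL-Library.Indicator_Function"
begin

definition balancing_weights :: "'a set \<Rightarrow> 'a set set \<Rightarrow> ('a set \<Rightarrow> real) \<Rightarrow> bool" where
  "balancing_weights N C lam \<longleftrightarrow>
     (\<forall>S\<in>C. lam S > 0) \<and> (\<forall>i\<in>N. (\<Sum>S\<in>C. lam S * indicator S i) = 1)"

definition balanced :: "'a set \<Rightarrow> 'a set set \<Rightarrow> bool" where
  "balanced N C \<longleftrightarrow> (\<forall>S\<in>C. S \<noteq> {} \<and> S \<subseteq> N) \<and> (\<exists>lam. balancing_weights N C lam)"

definition minimal_balanced :: "'a set \<Rightarrow> 'a set set \<Rightarrow> bool" where
  "minimal_balanced N C \<longleftrightarrow> balanced N C \<and> (\<forall>C'. C' \<subset> C \<longrightarrow> \<not> balanced N C')"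

definition indep_columns :: "'a set \<Rightarrow> 'a set set \<Rightarrow> bool" where
  "indep_columns N D \<longleftrightarrow>
     (\<forall>c :: 'a set \<Rightarrow> real. (\<forall>i\<in>N. (\<Sum>S\<in>D. c S * indicator S i) = 0) \<longrightarrow> (\<forall>S\<in>D. c S = 0))"

definition incidence_rank :: "'a set \<Rightarrow> 'a set set \<Rightarrow> nat" where
  "incidence_rank N C = Max {card D | D. D \<subseteq> C \<and> indep_columns N D}"

definition extend_by :: "'a \<Rightarrow> 'a set set \<Rightarrow> 'a set set \<Rightarrow> 'a set set" where
  "extend_by p C J = (\<lambda>S. insert p S) ` J \<union> (C - J)"

end

theory Submission
  imports Defs
begin

definition kerN :: "'a set \<Rightarrow> 'a set set \<Rightarrow> ('a set \<Rightarrow> real) \<Rightarrow> bool" where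
  "kerN N D c \<longleftrightarrow> (\<forall>i\<in>N. (\<Sum>S\<in>D. c S * indicator S i) = 0)"

definition coll :: "'a set \<Rightarrow> 'a set set \<Rightarrow> bool" where
  "coll N C \<longleftrightarrow> (\<forall>S\<in>C. S \<noteq> {} \<and> S \<subseteq> N)"

lemma coll_finite: "finite N \<Longrightarrow> coll N C \<Longrightarrow> finite C"
  unfolding coll_def by (meson PowI finite_Pow_iff finite_subset subsetI)

lemma indep_iff: "indep_columns N D \<longleftrightarrow> (\<forall>c. kerN N D c \<longrightarrow> (\<forall>S\<in>D. c S = 0))"
  unfolding indep_columns_def kerN_def by simp

lemma ker_neg_exists:
  assumes fin: "finite C" and co: "coll N C" and k: "kerN N C c" and S0: "S0 \<in> C" "c S0 > 0"
  shows "\<exists>S\<in>C. c S < 0"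
proof (rule ccontr)
  assume "\<not> ?thesis"
  hence nn: "\<forall>S\<in>C. c S \<ge> 0" by force
  from co S0 obtain i where i: "i \<in> S0" "i \<in> N" unfolding coll_def by blast
  have "c S0 * indicator S0 i \<le> (\<Sum>S\<in>C. c S * indicator S i)"
    by (rule member_le_sum[OF S0(1)]) (use nn fin in \<open>auto simp: indicator_def\<close>)
  moreover have "(\<Sum>S\<in>C. c S * indicator S i) = 0" using k i unfolding kerN_def by auto
  ultimately show False using i S0 by simp
qed

lemma ker_neg_exists2:
  assumes fin: "finite C" and co: "coll N C" and k: "kerN N C c" and S0: "S0 \<in> C" "c S0 \<noteq> 0"
  shows "\<exists>S\<in>C. c S < 0"
proof (cases "c S0 < 0")
  case True thus ?thesis using S0 by blast
next
  case False thus ?thesis using ker_neg_exists[OF fin co k S0(1)] S0 by linarith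
qed

lemma ker_pos_exists2:
  assumes fin: "finite C" and co: "coll N C" and k: "kerN N C c" and S0: "S0 \<in> C" "c S0 \<noteq> 0"
  shows "\<exists>S\<in>C. c S > 0"
proof -
  have "kerN N C (\<lambda>S. - c S)" using k unfolding kerN_def by (simp add: sum_negf)
  from ker_neg_exists2[OF fin co this S0(1)] S0 show ?thesis by auto
qed

lemma balanced_coll: "balanced N C \<Longrightarrow> coll N C"
  unfolding balanced_def coll_def by auto

lemma minimal_iff:
  assumes "finite N"
  shows "minimal_balanced N C \<longleftrightarrow> balanced N C \<and> indep_columns N C"
proof
  assume m: "minimal_balanced N C"
  hence b: "balanced N C" unfolding minimal_balanced_def by auto
  hence co: "coll N C" by (rule balanced_coll)
  have fin: "finite C" using coll_finite[OF assms co] .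
  from b obtain lam where lam: "balancing_weights N C lam" unfolding balanced_def by auto
  have "indep_columns N C"
  proof (rule ccontr)
    assume "\<not> indep_columns N C"
    then obtain c S0 where k: "kerN N C c" and S0: "S0 \<in> C" "c S0 \<noteq> 0"
      unfolding indep_iff by auto
    define M where "M = {S\<in>C. c S < 0}"
    have Mne: "M \<noteq> {}" using ker_neg_exists2[OF fin co k S0] unfolding M_def by auto
    have Mfin: "finite M" using fin unfolding M_def by auto
    define s where "s = Min ((\<lambda>S. lam S / - c S) ` M)"
    have "s \<in> (\<lambda>S. lam S / - c S) ` M" unfolding s_def by (rule Min_in) (use Mfin Mne in auto)
    then obtain S1 where S1: "S1 \<in> M" "s = lam S1 / - c S1" by auto
    have lpos: "\<forall>S\<in>C. lam S > 0" using lam unfolding balancing_weights_def by auto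
    have spos: "s > 0" using S1 lpos unfolding M_def by (auto intro: divide_pos_neg)
    define l2 where "l2 = (\<lambda>S. lam S + s * c S)"
    have l2nn: "l2 S \<ge> 0" if "S \<in> C" for S
    proof (cases "c S < 0")
      case True
      hence "S \<in> M" using that M_def by auto
      hence "s \<le> lam S / - c S" unfolding s_def using Mfin by (intro Min_le) auto
      hence "s * (- c S) \<le> lam S" using True by (subst (asm) pos_le_divide_eq) auto
      thus ?thesis unfolding l2_def by (simp add: algebra_simps)
    next
      case False thus ?thesis using lpos that spos unfolding l2_def
        by (smt (verit) mult_nonneg_nonneg)
    qed
    have l2S1: "l2 S1 = 0" using S1 unfolding l2_def M_def by auto
    define C' where "C' = {S\<in>C. l2 S > 0}"
    have "S1 \<in> C" "S1 \<notin> C'" using S1 l2S1 unfolding C'_def M_def by auto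
    hence sub: "C' \<subset> C" unfolding C'_def by blast
    have "balanced N C'"
      unfolding balanced_def
    proof (intro conjI)
      show "\<forall>S\<in>C'. S \<noteq> {} \<and> S \<subseteq> N" using co sub unfolding coll_def by auto
      have "balancing_weights N C' l2"
        unfolding balancing_weights_def
      proof (intro conjI ballI)
        fix i assume i: "i \<in> N"
        have "(\<Sum>S\<in>C'. l2 S * indicator S i) = (\<Sum>S\<in>C. l2 S * indicator S i)"
          by (rule sum.mono_neutral_left) (use fin l2nn in \<open>force simp: C'_def\<close>)+
        also have "\<dots> = (\<Sum>S\<in>C. lam S * indicator S i) + s * (\<Sum>S\<in>C. c S * indicator S i)"
          unfolding l2_def by (simp add: algebra_simps sum.distrib sum_distrib_left)
        also have "\<dots> = 1" using lam k i unfolding balancing_weights_def kerN_def by auto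
        finally show "(\<Sum>S\<in>C'. l2 S * indicator S i) = 1" .
      qed (auto simp: C'_def)
      thus "\<exists>lam. balancing_weights N C' lam" by blast
    qed
    thus False using m sub unfolding minimal_balanced_def by auto
  qed
  thus "balanced N C \<and> indep_columns N C" using b by auto
next
  assume a: "balanced N C \<and> indep_columns N C"
  hence co: "coll N C" using balanced_coll by auto
  have fin: "finite C" using coll_finite[OF assms co] .
  from a obtain lam where lam: "balancing_weights N C lam" unfolding balanced_def by auto
  have "\<not> balanced N C'" if sub: "C' \<subset> C" for C'
  proof
    assume "balanced N C'"
    then obtain l' where l': "balancing_weights N C' l'" unfolding balanced_def by auto
    define c where "c = (\<lambda>S. lam S - (if S \<in> C' then l' S else 0))"
    have "kerN N C c" unfolding kerN_def
    proof
      fix i assume i: "i \<in> N"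
      have "(\<Sum>S\<in>C. (if S \<in> C' then l' S else 0) * indicator S i) = (\<Sum>S\<in>C'. l' S * indicator S i)"
        by (rule sum.mono_neutral_cong_right) (use fin sub in auto)
      thus "(\<Sum>S\<in>C. c S * indicator S i) = 0"
        using lam l' i unfolding c_def balancing_weights_def
        by (simp add: left_diff_distrib sum_subtractf)
    qed
    moreover obtain S where "S \<in> C" "S \<notin> C'" using sub by auto
    moreover have "lam S > 0" using lam \<open>S \<in> C\<close> unfolding balancing_weights_def by auto
    ultimately show False using a unfolding indep_iff c_def by force
  qed
  thus "minimal_balanced N C" using a unfolding minimal_balanced_def by auto
qed



definition fe :: "'a \<Rightarrow> 'a set set \<Rightarrow> 'a set \<Rightarrow> 'a set" where
  "fe p J S = (if S \<in> J then insert p S else S)"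

lemma fe_ind_N: "i \<noteq> p \<Longrightarrow> indicator (fe p J S) i = (indicator S i :: real)"
  unfolding fe_def by (auto simp: indicator_def)

lemma fe_ind_p: "p \<notin> S \<Longrightarrow> indicator (fe p J S) p = (if S \<in> J then 1 else (0::real))"
  unfolding fe_def by (auto simp: indicator_def)

lemma fe_minus: "p \<notin> S \<Longrightarrow> fe p J S - {p} = S"
  unfolding fe_def by auto

lemma fe_inj: "coll N C \<Longrightarrow> p \<notin> N \<Longrightarrow> inj_on (fe p J) C"
proof (rule inj_onI)
  fix x y assume "coll N C" "p \<notin> N" "x \<in> C" "y \<in> C" "fe p J x = fe p J y"
  moreover hence "p \<notin> x" "p \<notin> y" unfolding coll_def by auto
  ultimately show "x = y" using fe_minus by metis
qed

lemma extend_fe: "J \<subseteq> C \<Longrightarrow> extend_by p C J = fe p J ` C"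
  unfolding extend_by_def fe_def by (auto simp: image_iff)

lemma fe_ne_p: "S \<noteq> {} \<Longrightarrow> p \<notin> S \<Longrightarrow> fe p J S \<noteq> {p}"
  unfolding fe_def by auto

lemma fe_ne_ins: "\<delta> \<notin> J \<Longrightarrow> p \<notin> S \<Longrightarrow> p \<notin> \<delta> \<Longrightarrow> fe p J S \<noteq> insert p \<delta>"
  unfolding fe_def by (auto simp: insert_ident)

lemma fe_eq_delta: "\<delta> \<notin> J \<Longrightarrow> p \<notin> \<delta> \<Longrightarrow> fe p J \<delta> = \<delta>"
  unfolding fe_def by auto

lemma fe_eq_delta_iff: "\<delta> \<notin> J \<Longrightarrow> p \<notin> \<delta> \<Longrightarrow> (fe p J S = \<delta>) \<longleftrightarrow> S = \<delta>"
  unfolding fe_def by auto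

locale setting =
  fixes N :: "'a set" and p :: 'a and C :: "'a set set" and J :: "'a set set"
  assumes finN: "finite N" and pN: "p \<notin> N" and co: "coll N C" and JC: "J \<subseteq> C"
begin

abbreviation "f \<equiv> fe p J"

lemma finC: "finite C" using coll_finite[OF finN co] .
lemma finJ: "finite J" using finC JC finite_subset by auto
lemma pS: "S \<in> C \<Longrightarrow> p \<notin> S" using co pN unfolding coll_def by auto
lemma Sne: "S \<in> C \<Longrightarrow> S \<noteq> {}" using co unfolding coll_def by auto
lemma inj: "inj_on f C" using fe_inj[OF co pN] .

lemma sum_img: "(\<Sum>T\<in>f ` C. g T) = (\<Sum>S\<in>C. g (f S))"
  using sum.reindex[OF inj] by simp

lemma rowN: "i \<in> N \<Longrightarrow> (\<Sum>S\<in>C. c S * indicator (f S) i) = (\<Sum>S\<in>C. c S * (indicator S i :: real))"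
proof -
  assume "i \<in> N" hence "i \<noteq> p" using pN by auto
  thus ?thesis by (simp add: fe_ind_N)
qed

lemma rowp: "(\<Sum>S\<in>C. c S * indicator (f S) p) = (\<Sum>S\<in>J. c S :: real)"
proof -
  have "(\<Sum>S\<in>C. c S * indicator (f S) p) = (\<Sum>S\<in>C. if S \<in> J then c S else 0)"
    by (intro sum.cong) (auto simp: fe_ind_p[OF pS])
  also have "\<dots> = (\<Sum>S\<in>J. c S)" using JC finC by (simp add: sum.If_cases Int_absorb1)
  finally show ?thesis .
qed

lemma coll_B: "coll (insert p N) (f ` C)"
  using co unfolding coll_def fe_def by auto

lemma notin_p: "{p} \<notin> f ` C"
proof
  assume "{p} \<in> f ` C"
  then obtain S where S: "S \<in> C" "{p} = f S" by auto
  have "f S \<noteq> {p}" by (rule fe_ne_p[OF Sne[OF S(1)] pS[OF S(1)]])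
  thus False using S(2) by simp
qed

lemma notin_ins: "\<delta> \<in> C - J \<Longrightarrow> insert p \<delta> \<notin> f ` C"
proof
  assume d: "\<delta> \<in> C - J" and "insert p \<delta> \<in> f ` C"
  then obtain S where S: "S \<in> C" "insert p \<delta> = f S" by auto
  have "\<delta> \<notin> J" "p \<notin> \<delta>" using d pS by auto
  thus False using fe_ne_ins[of \<delta> J p S] pS[OF S(1)] S(2) by simp
qed

lemma P_N: "i \<in> N \<Longrightarrow> (\<Sum>T\<in>f ` C. c T * indicator T i) = (\<Sum>S\<in>C. c (f S) * (indicator S i :: real))"
  by (simp add: sum_img rowN)
lemma P_p: "(\<Sum>T\<in>f ` C. c T * indicator T p) = (\<Sum>S\<in>J. c (f S) :: real)"
  by (simp add: sum_img rowp)

lemma Q_N: "i \<in> N \<Longrightarrow> (\<Sum>T\<in>f ` C \<union> {{p}}. c T * indicator T i) = (\<Sum>S\<in>C. c (f S) * (indicator S i :: real))"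
proof -
  assume i: "i \<in> N" hence "indicator {p} i = (0::real)" using pN by (auto simp: indicator_def)
  thus ?thesis using notin_p finC i by (subst sum.union_disjoint) (auto simp: P_N)
qed
lemma Q_p: "(\<Sum>T\<in>f ` C \<union> {{p}}. c T * indicator T p) = c {p} + (\<Sum>S\<in>J. c (f S) :: real)"
  using notin_p finC by (subst sum.union_disjoint) (auto simp: P_p)

lemma R_N: assumes "\<delta> \<in> C - J" "i \<in> N"
  shows "(\<Sum>T\<in>f ` C \<union> {insert p \<delta>}. c T * indicator T i)
     = (\<Sum>S\<in>C. (c (f S) + (if S = \<delta> then c (insert p \<delta>) else 0)) * (indicator S i :: real))"
proof -
  have "(\<Sum>T\<in>f ` C \<union> {insert p \<delta>}. c T * indicator T i)
      = (\<Sum>S\<in>C. c (f S) * indicator S i) + c (insert p \<delta>) * indicator (insert p \<delta>) i"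
    using notin_ins[OF assms(1)] finC assms by (subst sum.union_disjoint) (auto simp: P_N)
  also have "c (insert p \<delta>) * indicator (insert p \<delta>) i = (\<Sum>S\<in>C. (if S = \<delta> then c (insert p \<delta>) else 0) * (indicator S i :: real))"
  proof -
    have "(\<Sum>S\<in>C. (if S = \<delta> then c (insert p \<delta>) else 0) * (indicator S i :: real))
       = (\<Sum>S\<in>C. if S = \<delta> then c (insert p \<delta>) * indicator \<delta> i else 0)"
      by (rule sum.cong) auto
    also have "\<dots> = c (insert p \<delta>) * indicator \<delta> i" using assms finC by simp
    also have "indicator \<delta> i = (indicator (insert p \<delta>) i :: real)" using assms pN by (auto simp: indicator_def)
    finally show ?thesis by simp
  qed
  finally show ?thesis by (simp add: distrib_right sum.distrib)
qed

lemma R_p: assumes "\<delta> \<in> C - J"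
  shows "(\<Sum>T\<in>f ` C \<union> {insert p \<delta>}. c T * indicator T p) = c (insert p \<delta>) + (\<Sum>S\<in>J. c (f S) :: real)"
  using notin_ins[OF assms(1)] finC by (subst sum.union_disjoint) (auto simp: P_p)

end


context setting begin

lemma fe_back: "S \<in> C \<Longrightarrow> f S - {p} = S" by (rule fe_minus[OF pS])

lemma sumC_cong_back: "(\<Sum>S\<in>C. g (f S - {p}) * (indicator S i :: real)) = (\<Sum>S\<in>C. g S * indicator S i)"
  by (rule sum.cong) (auto simp: fe_back)
lemma sumJ_cong_back: "(\<Sum>S\<in>J. g (f S - {p}) :: real) = (\<Sum>S\<in>J. g S)"
  using JC by (intro sum.cong) (auto simp: fe_back)

lemma indepP: "indep_columns (insert p N) (f ` C) \<longleftrightarrow>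
   (\<forall>c. kerN N C c \<and> (\<Sum>S\<in>J. c S) = 0 \<longrightarrow> (\<forall>S\<in>C. c S = 0))"
proof
  assume h: "indep_columns (insert p N) (f ` C)"
  show "\<forall>c. kerN N C c \<and> (\<Sum>S\<in>J. c S) = 0 \<longrightarrow> (\<forall>S\<in>C. c S = 0)"
  proof (intro allI impI)
    fix c assume a: "kerN N C c \<and> (\<Sum>S\<in>J. c S) = 0"
    have "kerN (insert p N) (f ` C) (\<lambda>T. c (T - {p}))"
      unfolding kerN_def using a P_p P_N
      by (auto simp: kerN_def sumC_cong_back sumJ_cong_back)
    hence "\<forall>T\<in>f ` C. c (T - {p}) = 0" using h unfolding indep_iff by blast
    thus "\<forall>S\<in>C. c S = 0" using fe_back by fastforce
  qed
next
  assume h: "\<forall>c. kerN N C c \<and> (\<Sum>S\<in>J. c S) = 0 \<longrightarrow> (\<forall>S\<in>C. c S = 0)"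
  show "indep_columns (insert p N) (f ` C)" unfolding indep_iff
  proof (intro allI impI)
    fix c assume k: "kerN (insert p N) (f ` C) c"
    have "kerN N C (\<lambda>S. c (f S))" using k P_N unfolding kerN_def by auto
    moreover have "(\<Sum>S\<in>J. c (f S)) = 0" using k P_p unfolding kerN_def by auto
    ultimately show "\<forall>T\<in>f ` C. c T = 0" using h by auto
  qed
qed

lemma indepQ: "indep_columns (insert p N) (f ` C \<union> {{p}}) \<longleftrightarrow> indep_columns N C"
proof
  assume h: "indep_columns (insert p N) (f ` C \<union> {{p}})"
  show "indep_columns N C" unfolding indep_iff
  proof (intro allI impI)
    fix c assume a: "kerN N C c"
    define c' where "c' = (\<lambda>T. if T = {p} then - (\<Sum>S\<in>J. c S) else c (T - {p}))"
    have c'f: "c' (f S) = c S" if "S \<in> C" for S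
      using that notin_p fe_back unfolding c'_def by (auto simp: image_iff)
    have "(\<Sum>S\<in>J. c' (f S)) = (\<Sum>S\<in>J. c S)" using JC c'f by (intro sum.cong) auto
    moreover have "(\<Sum>S\<in>C. c' (f S) * indicator S i) = (\<Sum>S\<in>C. c S * indicator S i)" for i
      using c'f by (intro sum.cong) auto
    ultimately have "kerN (insert p N) (f ` C \<union> {{p}}) c'"
      unfolding kerN_def using a Q_p Q_N by (auto simp: kerN_def c'_def)
    hence "\<forall>T\<in>f ` C \<union> {{p}}. c' T = 0" using h unfolding indep_iff by blast
    thus "\<forall>S\<in>C. c S = 0" using c'f by fastforce
  qed
next
  assume h: "indep_columns N C"
  show "indep_columns (insert p N) (f ` C \<union> {{p}})" unfolding indep_iff
  proof (intro allI impI)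
    fix c assume k: "kerN (insert p N) (f ` C \<union> {{p}}) c"
    have "kerN N C (\<lambda>S. c (f S))" using k Q_N unfolding kerN_def by auto
    hence z: "\<forall>S\<in>C. c (f S) = 0" using h unfolding indep_iff by blast
    have "c {p} + (\<Sum>S\<in>J. c (f S)) = 0" using k Q_p unfolding kerN_def by auto
    moreover have "(\<Sum>S\<in>J. c (f S)) = 0" using z JC by (intro sum.neutral) auto
    ultimately show "\<forall>T\<in>f ` C \<union> {{p}}. c T = 0" using z by auto
  qed
qed

lemma indepR: assumes d: "\<delta> \<in> C - J"
  shows "indep_columns (insert p N) (f ` C \<union> {insert p \<delta>}) \<longleftrightarrow> indep_columns N C"
proof
  have pd: "p \<notin> \<delta>" using d pS by auto
  have fd: "f \<delta> = \<delta>" by (rule fe_eq_delta) (use d pd in auto)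
  assume h: "indep_columns (insert p N) (f ` C \<union> {insert p \<delta>})"
  show "indep_columns N C" unfolding indep_iff
  proof (intro allI impI)
    fix c assume a: "kerN N C c"
    define c' where "c' = (\<lambda>T. if T = insert p \<delta> then - (\<Sum>S\<in>J. c S)
        else if T = \<delta> then c \<delta> + (\<Sum>S\<in>J. c S) else c (T - {p}))"
    have c'f: "c' (f S) = c S + (if S = \<delta> then (\<Sum>S\<in>J. c S) else 0)" if "S \<in> C" for S
    proof -
      have "f S \<noteq> insert p \<delta>" using notin_ins[OF d] that by auto
      moreover have "f S = \<delta> \<longleftrightarrow> S = \<delta>" by (rule fe_eq_delta_iff) (use d pd in auto)
      ultimately show ?thesis using that fe_back pd unfolding c'_def by auto
    qed
    have e1: "(\<Sum>S\<in>J. c' (f S)) = (\<Sum>S\<in>J. c S)" using JC c'f d by (intro sum.cong) auto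
    have c'i: "c' (insert p \<delta>) = - (\<Sum>S\<in>J. c S)" unfolding c'_def by simp
    have e2: "(\<Sum>S\<in>C. (c' (f S) + (if S = \<delta> then c' (insert p \<delta>) else 0)) * indicator S i)
        = (\<Sum>S\<in>C. c S * indicator S i)" for i
      using c'f c'i by (intro sum.cong) auto
    have "kerN (insert p N) (f ` C \<union> {insert p \<delta>}) c'"
      unfolding kerN_def
    proof
      fix i assume "i \<in> insert p N"
      then consider "i = p" | "i \<in> N" by auto
      thus "(\<Sum>T\<in>f ` C \<union> {insert p \<delta>}. c' T * indicator T i) = 0"
      proof cases
        case 1 thus ?thesis using R_p[OF d, of c'] c'i e1 by simp
      next
        case 2 thus ?thesis using R_N[OF d 2, of c'] e2 a unfolding kerN_def by simp
      qed
    qed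
    hence z: "\<forall>T\<in>f ` C \<union> {insert p \<delta>}. c' T = 0" using h unfolding indep_iff by blast
    have zJ: "(\<Sum>S\<in>J. c S) = 0" using z unfolding c'_def by auto
    show "\<forall>S\<in>C. c S = 0"
    proof
      fix S assume S: "S \<in> C"
      have "c' (f S) = 0" using z S by auto
      thus "c S = 0" using c'f[OF S] zJ by (simp split: if_splits)
    qed
  qed
next
  have pd: "p \<notin> \<delta>" using d pS by auto
  have fd: "f \<delta> = \<delta>" by (rule fe_eq_delta) (use d pd in auto)
  assume h: "indep_columns N C"
  show "indep_columns (insert p N) (f ` C \<union> {insert p \<delta>})" unfolding indep_iff
  proof (intro allI impI)
    fix c assume k: "kerN (insert p N) (f ` C \<union> {insert p \<delta>}) c"
    have "kerN N C (\<lambda>S. c (f S) + (if S = \<delta> then c (insert p \<delta>) else 0))"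
      using k R_N[OF d] unfolding kerN_def by auto
    hence z: "\<forall>S\<in>C. c (f S) + (if S = \<delta> then c (insert p \<delta>) else 0) = 0"
      using h unfolding indep_iff by blast
    have "c (insert p \<delta>) + (\<Sum>S\<in>J. c (f S)) = 0" using k R_p[OF d] unfolding kerN_def by auto
    moreover have "(\<Sum>S\<in>J. c (f S)) = 0"
    proof (intro sum.neutral ballI)
      fix S assume S: "S \<in> J"
      hence SC: "S \<in> C" and Sd: "S \<noteq> \<delta>" using JC d by auto
      show "c (f S) = 0" using z[rule_format, OF SC] Sd by simp
    qed
    ultimately have "c (insert p \<delta>) = 0" by simp
    moreover have "\<forall>S\<in>C. c (f S) = 0" using z calculation by (metis add.right_neutral)
    ultimately show "\<forall>T\<in>f ` C \<union> {insert p \<delta>}. c T = 0" by auto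
  qed
qed

end


context setting begin

lemma bwP: "balancing_weights (insert p N) (f ` C) w \<longleftrightarrow>
   balancing_weights N C (\<lambda>S. w (f S)) \<and> (\<Sum>S\<in>J. w (f S)) = 1"
  unfolding balancing_weights_def using P_N P_p by auto

lemma bwQ: "balancing_weights (insert p N) (f ` C \<union> {{p}}) w \<longleftrightarrow>
   balancing_weights N C (\<lambda>S. w (f S)) \<and> w {p} > 0 \<and> w {p} + (\<Sum>S\<in>J. w (f S)) = 1"
  unfolding balancing_weights_def using Q_N Q_p by auto

lemma bwR: assumes d: "\<delta> \<in> C - J"
  shows "balancing_weights (insert p N) (f ` C \<union> {insert p \<delta>}) w \<longleftrightarrow>
   (\<forall>S\<in>C. w (f S) > 0) \<and> w (insert p \<delta>) > 0 \<and>
   (\<forall>i\<in>N. (\<Sum>S\<in>C. (w (f S) + (if S = \<delta> then w (insert p \<delta>) else 0)) * indicator S i) = 1) \<and>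
   w (insert p \<delta>) + (\<Sum>S\<in>J. w (f S)) = 1"
  unfolding balancing_weights_def using R_N[OF d] R_p[OF d] by auto

end


lemma sum_single: "finite B \<Longrightarrow> A \<in> B \<Longrightarrow> (\<Sum>X\<in>B. (if X = A then (1::real) else 0) * g X) = g A"
  by (simp add: if_distrib[where f="\<lambda>x. x * _"] cong: if_cong)

lemma ind_minus: "p \<in> T \<Longrightarrow> indicator T i = indicator (T - {p}) i + (indicator {p} i :: real)"
  by (auto simp: indicator_def)

lemma no_pK:
  assumes ind: "indep_columns M B" and fin: "finite B" and P: "{p} \<in> B" "T \<in> B" "p \<in> T" "T - {p} \<in> B" "T - {p} \<noteq> {}"
  shows False
proof -
  define c where "c = (\<lambda>X. (if X = T then 1 else 0) - (if X = T - {p} then 1 else 0) - (if X = {p} then (1::real) else 0))"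
  have "kerN M B c" unfolding kerN_def
  proof
    fix i
    have "(\<Sum>X\<in>B. c X * indicator X i) = indicator T i - indicator (T - {p}) i - indicator {p} i"
      unfolding c_def using fin P by (simp add: left_diff_distrib sum_subtractf sum_single)
    also have "\<dots> = 0" using ind_minus[OF P(3)] by simp
    finally show "(\<Sum>X\<in>B. c X * indicator X i) = 0" .
  qed
  moreover have "c T = 1" unfolding c_def using P by auto
  ultimately show False using ind P unfolding indep_iff by force
qed

lemma no_KK:
  assumes ind: "indep_columns M B" and fin: "finite B"
    and P: "T1 \<in> B" "p \<in> T1" "T1 - {p} \<in> B" "T2 \<in> B" "p \<in> T2" "T2 - {p} \<in> B"
  shows "T1 = T2"
proof (rule ccontr)
  assume ne: "T1 \<noteq> T2"
  define c where "c = (\<lambda>X. (if X = T1 then 1 else 0) - (if X = T1 - {p} then 1 else 0)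
     - (if X = T2 then 1 else 0) + (if X = T2 - {p} then (1::real) else 0))"
  have "kerN M B c" unfolding kerN_def
  proof
    fix i
    have "(\<Sum>X\<in>B. c X * indicator X i) = indicator T1 i - indicator (T1 - {p}) i - indicator T2 i + indicator (T2 - {p}) i"
      unfolding c_def using fin P by (simp add: left_diff_distrib distrib_right sum_subtractf sum.distrib sum_single)
    also have "\<dots> = 0" using ind_minus[OF P(2)] ind_minus[OF P(5)] by simp
    finally show "(\<Sum>X\<in>B. c X * indicator X i) = 0" .
  qed
  moreover have "c T1 = 1" unfolding c_def using P ne by auto
  ultimately show False using ind P unfolding indep_iff by force
qed

lemma decomp:
  assumes pN: "p \<notin> N" and co: "coll (insert p N) B"
    and Cd: "C = (\<lambda>T. T - {p}) ` (B - {{p}})" and Jd: "J = {S\<in>C. S \<notin> B}"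
    and Kd: "K = {T\<in>B. p \<in> T \<and> T - {p} \<in> B}"
  shows "coll N C" "J \<subseteq> C" "B = fe p J ` C \<union> ({{p}} \<inter> B) \<union> K"
proof -
  show "coll N C" using co unfolding coll_def Cd by auto
  show "J \<subseteq> C" unfolding Jd by auto
  have Bne: "\<And>T. T \<in> B \<Longrightarrow> T \<noteq> {}" using co unfolding coll_def by auto
  show "B = fe p J ` C \<union> ({{p}} \<inter> B) \<union> K"
  proof
    show "B \<subseteq> fe p J ` C \<union> ({{p}} \<inter> B) \<union> K"
    proof
      fix T assume T: "T \<in> B"
      show "T \<in> fe p J ` C \<union> ({{p}} \<inter> B) \<union> K"
      proof (cases "T = {p} \<or> T \<in> K")
        case True thus ?thesis using T by auto
      next
        case False
        have S: "T - {p} \<in> C" using T False unfolding Cd by auto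
        show ?thesis
        proof (cases "p \<in> T")
          case True
          hence "T - {p} \<notin> B" using False T unfolding Kd by auto
          hence "T - {p} \<in> J" using S unfolding Jd by auto
          hence "fe p J (T - {p}) = T" using True unfolding fe_def by auto
          thus ?thesis using S by (metis UnI1 imageI)
        next
          case pT: False
          hence "T - {p} = T" by auto
          hence "T - {p} \<notin> J" using T unfolding Jd by auto
          hence "fe p J (T - {p}) = T" using pT unfolding fe_def by auto
          thus ?thesis using S by (metis UnI1 imageI)
        qed
      qed
    qed
    show "fe p J ` C \<union> ({{p}} \<inter> B) \<union> K \<subseteq> B"
    proof -
      have "fe p J S \<in> B" if S: "S \<in> C" for S
      proof -
        obtain T where T: "T \<in> B" "T \<noteq> {p}" "S = T - {p}" using S unfolding Cd by auto
        show ?thesis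
        proof (cases "S \<in> J")
          case True
          hence "S \<notin> B" unfolding Jd by auto
          hence "T \<noteq> S" using T(1) by blast
          hence "p \<in> T" using T(3) by blast
          hence "insert p S = T" using T(3) by blast
          thus ?thesis using True T unfolding fe_def by auto
        next
          case False
          hence "S \<in> B" using S unfolding Jd by auto
          thus ?thesis using False unfolding fe_def by auto
        qed
      qed
      thus ?thesis unfolding Kd by auto
    qed
  qed
qed



lemma ker_ext0:
  assumes "finite C" "D \<subseteq> C" "kerN N D e"
  shows "kerN N C (\<lambda>S. if S \<in> D then e S else 0)"
  unfolding kerN_def
proof
  fix i assume "i \<in> N"
  have "(\<Sum>S\<in>C. (if S \<in> D then e S else 0) * indicator S i) = (\<Sum>S\<in>D. e S * indicator S i)"
    by (rule sum.mono_neutral_cong_right) (use assms in auto)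
  thus "(\<Sum>S\<in>C. (if S \<in> D then e S else 0) * indicator S i) = 0" using assms \<open>i \<in> N\<close> unfolding kerN_def by auto
qed

lemma ker_restrict:
  assumes "finite C" "D \<subseteq> C" "kerN N C e" "\<forall>S\<in>C-D. e S = 0"
  shows "kerN N D e"
  unfolding kerN_def
proof
  fix i assume "i \<in> N"
  have "(\<Sum>S\<in>D. e S * indicator S i) = (\<Sum>S\<in>C. e S * indicator S i)"
    by (rule sum.mono_neutral_left) (use assms in auto)
  thus "(\<Sum>S\<in>D. e S * indicator S i) = 0" using assms \<open>i \<in> N\<close> unfolding kerN_def by auto
qed

lemma ker_lin: "kerN N C a \<Longrightarrow> kerN N C b \<Longrightarrow> kerN N C (\<lambda>S. a S - s * b S)"
  unfolding kerN_def by (simp add: left_diff_distrib sum_subtractf mult.assoc flip: sum_distrib_left)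

lemma rank_eq:
  assumes finN: "finite N" and co: "coll N C" and k: "kerN N C d" and Sx: "Sx \<in> C" "d Sx \<noteq> 0"
    and od: "\<forall>e. kerN N C e \<longrightarrow> (\<exists>s. \<forall>S\<in>C. e S = s * d S)"
  shows "incidence_rank N C = card C - 1"
proof -
  have finC: "finite C" using coll_finite[OF finN co] .
  have ind: "indep_columns N (C - {Sx})" unfolding indep_iff
  proof (intro allI impI)
    fix e assume ke: "kerN N (C - {Sx}) e"
    have "kerN N C (\<lambda>S. if S \<in> C - {Sx} then e S else 0)" by (rule ker_ext0) (use finC ke in auto)
    then obtain s where s: "\<forall>S\<in>C. (if S \<in> C - {Sx} then e S else 0) = s * d S" using od by blast
    hence "s = 0" using Sx s by (metis Diff_iff mult_eq_0_iff singletonI)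
    show "\<forall>S\<in>C - {Sx}. e S = 0"
    proof
      fix S assume "S \<in> C - {Sx}"
      thus "e S = 0" using s \<open>s = 0\<close> by (metis DiffD1 mult_zero_left)
    qed
  qed
  have notind: "\<not> indep_columns N C" using k Sx unfolding indep_iff by auto
  let ?R = "{card D | D. D \<subseteq> C \<and> indep_columns N D}"
  have "Max ?R = card C - 1"
  proof (rule Max_eqI)
    show "finite ?R" by (rule finite_subset[of _ "{..card C}"]) (use finC card_mono in auto)
    show "card C - 1 \<in> ?R" using ind Sx finC by (auto intro!: exI[of _ "C - {Sx}"])
    fix y assume "y \<in> ?R"
    then obtain D where D: "y = card D" "D \<subseteq> C" "indep_columns N D" by auto
    hence "D \<noteq> C" using notind by auto
    hence "D \<subset> C" using D by auto
    hence "card D < card C" using finC psubset_card_mono by auto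
    thus "y \<le> card C - 1" using D by auto
  qed
  thus ?thesis unfolding incidence_rank_def .
qed

lemma rank_onedim:
  assumes finN: "finite N" and co: "coll N C" and r: "incidence_rank N C = card C - 1"
    and Cne: "C \<noteq> {}" and k: "kerN N C d" and dJ: "(\<Sum>S\<in>J. d S) \<noteq> 0" and JC: "J \<subseteq> C"
    and kc: "kerN N C c"
  shows "\<exists>s. \<forall>S\<in>C. c S = s * d S"
proof -
  have finC: "finite C" using coll_finite[OF finN co] .
  let ?R = "{card D | D. D \<subseteq> C \<and> indep_columns N D}"
  have fR: "finite ?R" by (rule finite_subset[of _ "{..card C}"]) (use finC card_mono in auto)
  have "indep_columns N {}" unfolding indep_columns_def by auto
  hence "0 \<in> ?R" by force
  hence "Max ?R \<in> ?R" using fR Max_in by blast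
  then obtain D where D: "card D = card C - 1" "D \<subseteq> C" "indep_columns N D"
    using r unfolding incidence_rank_def by auto
  have "D \<noteq> C" using D Cne finC by (metis card_0_eq diff_less less_numeral_extra(1) nat_less_le zero_less_iff_neq_zero)
  then obtain S0 where S0: "S0 \<in> C" "S0 \<notin> D" using D by auto
  have "D \<subseteq> C - {S0}" using D S0 by auto
  moreover have "card (C - {S0}) = card D" using D S0 finC by auto
  ultimately have DD: "D = C - {S0}" using finC by (metis card_subset_eq finite_Diff)
  have CD: "C - D = {S0}" using DD S0 by blast
  have dS0: "d S0 \<noteq> 0"
  proof
    assume "d S0 = 0"
    hence "kerN N D d" by (intro ker_restrict[OF finC D(2) k]) (simp add: CD)
    hence "\<forall>S\<in>C. d S = 0" using D(3) DD \<open>d S0 = 0\<close> unfolding indep_iff by auto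
    hence "(\<Sum>S\<in>J. d S) = 0" using JC by (intro sum.neutral) auto
    thus False using dJ by simp
  qed
  define s where "s = c S0 / d S0"
  have "kerN N C (\<lambda>S. c S - s * d S)" using ker_lin[OF kc k] .
  moreover have "c S0 - s * d S0 = 0" using dS0 unfolding s_def by simp
  ultimately have "kerN N D (\<lambda>S. c S - s * d S)"
    by (intro ker_restrict[OF finC D(2)]) (simp_all add: CD)
  hence "\<forall>S\<in>D. c S - s * d S = 0" using D(3) unfolding indep_iff by blast
  hence "\<forall>S\<in>C. c S = s * d S" using DD \<open>c S0 - s * d S0 = 0\<close> by auto
  thus ?thesis by blast
qed



lemma endpoint:
  assumes finN: "finite N" and co: "coll N C" and w: "balancing_weights N C w"
    and k: "kerN N C d" and od: "\<forall>e. kerN N C e \<longrightarrow> (\<exists>s. \<forall>S\<in>C. e S = s * d S)"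
    and nn: "\<forall>S\<in>C. w S + a * d S \<ge> 0" and Sz: "Sz \<in> C" "w Sz + a * d Sz = 0" "d Sz \<noteq> 0"
  shows "minimal_balanced N {S\<in>C. w S + a * d S > 0} \<and>
         balancing_weights N {S\<in>C. w S + a * d S > 0} (\<lambda>S. w S + a * d S)"
proof -
  have finC: "finite C" using coll_finite[OF finN co] .
  define C1 where "C1 = {S\<in>C. w S + a * d S > 0}"
  have sub: "C1 \<subseteq> C" unfolding C1_def by auto
  have bw: "balancing_weights N C1 (\<lambda>S. w S + a * d S)"
    unfolding balancing_weights_def
  proof (intro conjI ballI)
    fix i assume i: "i \<in> N"
    have "(\<Sum>S\<in>C1. (w S + a * d S) * indicator S i) = (\<Sum>S\<in>C. (w S + a * d S) * indicator S i)"
      by (rule sum.mono_neutral_left) (use finC nn in \<open>force simp: C1_def\<close>)+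
    also have "\<dots> = (\<Sum>S\<in>C. w S * indicator S i) + a * (\<Sum>S\<in>C. d S * indicator S i)"
      by (simp add: algebra_simps sum.distrib sum_distrib_left)
    also have "\<dots> = 1" using w k i unfolding balancing_weights_def kerN_def by auto
    finally show "(\<Sum>S\<in>C1. (w S + a * d S) * indicator S i) = 1" .
  qed (auto simp: C1_def)
  have ind: "indep_columns N C1" unfolding indep_iff
  proof (intro allI impI)
    fix e assume ke: "kerN N C1 e"
    have "kerN N C (\<lambda>S. if S \<in> C1 then e S else 0)" by (rule ker_ext0) (use finC ke sub in auto)
    then obtain s where s: "\<forall>S\<in>C. (if S \<in> C1 then e S else 0) = s * d S" using od by blast
    have "Sz \<notin> C1" using Sz unfolding C1_def by auto
    hence "s = 0" using Sz s by (metis mult_eq_0_iff)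
    show "\<forall>S\<in>C1. e S = 0"
    proof
      fix S assume "S \<in> C1"
      thus "e S = 0" using s \<open>s = 0\<close> sub by (metis subsetD mult_zero_left)
    qed
  qed
  have "balanced N C1" unfolding balanced_def using bw co sub unfolding coll_def by blast
  hence "minimal_balanced N C1" using ind minimal_iff[OF finN] by auto
  thus ?thesis using bw unfolding C1_def by auto
qed

lemma segment:
  assumes finN: "finite N" and co: "coll N C" and w: "balancing_weights N C w"
    and JC: "J \<subseteq> C" and wJ: "(\<Sum>S\<in>J. w S) = 1"
    and aug: "\<forall>c. kerN N C c \<and> (\<Sum>S\<in>J. c S) = 0 \<longrightarrow> (\<forall>S\<in>C. c S = 0)"
    and ni: "\<not> indep_columns N C"
  shows "\<exists>C1 C2 lam1 lam2.
        minimal_balanced N C1 \<and> minimal_balanced N C2 \<and> C1 \<noteq> C2 \<and>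
        balancing_weights N C1 lam1 \<and> balancing_weights N C2 lam2 \<and>
        incidence_rank N (C1 \<union> C2) = card (C1 \<union> C2) - 1 \<and>
        J \<subseteq> C1 \<union> C2 \<and>
        (let mu = (\<lambda>S. if S \<in> C1 then lam1 S else 0);
             nu = (\<lambda>S. if S \<in> C2 then lam2 S else 0);
             muJ = (\<Sum>S\<in>J. mu S); nuJ = (\<Sum>S\<in>J. nu S);
             t = (1 - muJ) / (nuJ - muJ)
         in muJ \<noteq> nuJ \<and> 0 < t \<and> t < 1) \<and> C1 \<union> C2 = C"
proof -
  have finC: "finite C" using coll_finite[OF finN co] .
  have finJ: "finite J" using finC JC finite_subset by auto
  have wpos: "\<forall>S\<in>C. w S > 0" using w unfolding balancing_weights_def by auto
  obtain d S0 where k: "kerN N C d" and S0: "S0 \<in> C" "d S0 \<noteq> 0"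
    using ni unfolding indep_iff by auto
  define dJ where "dJ = (\<Sum>S\<in>J. d S)"
  have dJ: "dJ \<noteq> 0" using aug k S0 unfolding dJ_def by blast
  have od: "\<forall>e. kerN N C e \<longrightarrow> (\<exists>s. \<forall>S\<in>C. e S = s * d S)"
  proof (intro allI impI)
    fix e assume ke: "kerN N C e"
    define s where "s = (\<Sum>S\<in>J. e S) / dJ"
    have "kerN N C (\<lambda>S. e S - s * d S)" using ker_lin[OF ke k] .
    moreover have "(\<Sum>S\<in>J. e S - s * d S) = 0"
    proof -
      have "(\<Sum>S\<in>J. e S - s * d S) = (\<Sum>S\<in>J. e S) - s * dJ"
        unfolding dJ_def by (simp add: sum_subtractf sum_distrib_left)
      also have "\<dots> = 0" using dJ unfolding s_def by simp
      finally show ?thesis .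
    qed
    ultimately have "\<forall>S\<in>C. e S - s * d S = 0" using aug by blast
    thus "\<exists>s. \<forall>S\<in>C. e S = s * d S" by auto
  qed
  define Mn where "Mn = {S\<in>C. d S < 0}"
  define Mp where "Mp = {S\<in>C. d S > 0}"
  have Mn: "Mn \<noteq> {}" "finite Mn" using ker_neg_exists2[OF finC co k S0] finC unfolding Mn_def by auto
  have Mp: "Mp \<noteq> {}" "finite Mp" using ker_pos_exists2[OF finC co k S0] finC unfolding Mp_def by auto
  define a where "a = Min ((\<lambda>S. w S / - d S) ` Mn)"
  define b where "b = Min ((\<lambda>S. w S / d S) ` Mp)"
  have "a \<in> (\<lambda>S. w S / - d S) ` Mn" unfolding a_def by (rule Min_in) (use Mn in auto)
  then obtain S1 where S1: "S1 \<in> Mn" "a = w S1 / - d S1" by auto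
  have "b \<in> (\<lambda>S. w S / d S) ` Mp" unfolding b_def by (rule Min_in) (use Mp in auto)
  then obtain S2 where S2: "S2 \<in> Mp" "b = w S2 / d S2" by auto
  have apos: "a > 0" using S1 wpos unfolding Mn_def by (auto intro: divide_pos_neg)
  have bpos: "b > 0" using S2 wpos unfolding Mp_def by auto
  have nn1: "\<forall>S\<in>C. w S + a * d S \<ge> 0"
  proof
    fix S assume SC: "S \<in> C"
    show "w S + a * d S \<ge> 0"
    proof (cases "d S < 0")
      case True
      hence "S \<in> Mn" using SC Mn_def by auto
      hence "a \<le> w S / - d S" unfolding a_def using Mn by (intro Min_le) auto
      hence "a * (- d S) \<le> w S" using True by (subst (asm) pos_le_divide_eq) auto
      thus ?thesis by (simp add: algebra_simps)
    next
      case False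
      hence "a * d S \<ge> 0" using apos by (intro mult_nonneg_nonneg) auto
      thus ?thesis using wpos SC by (meson add_pos_nonneg less_imp_le)
    qed
  qed
  have nn2: "\<forall>S\<in>C. w S + (- b) * d S \<ge> 0"
  proof
    fix S assume SC: "S \<in> C"
    show "w S + (- b) * d S \<ge> 0"
    proof (cases "d S > 0")
      case True
      hence "S \<in> Mp" using SC Mp_def by auto
      hence "b \<le> w S / d S" unfolding b_def using Mp by (intro Min_le) auto
      hence "b * d S \<le> w S" using True by (subst (asm) pos_le_divide_eq) auto
      thus ?thesis by (simp add: algebra_simps)
    next
      case False
      hence "(- b) * d S \<ge> 0" using bpos by (intro mult_nonpos_nonpos) auto
      thus ?thesis using wpos SC by (meson add_pos_nonneg less_imp_le)
    qed
  qed
  have S1z: "S1 \<in> C" "w S1 + a * d S1 = 0" "d S1 \<noteq> 0" using S1 unfolding Mn_def by auto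
  have S2z: "S2 \<in> C" "w S2 + (- b) * d S2 = 0" "d S2 \<noteq> 0" using S2 unfolding Mp_def by auto
  define lam1 where "lam1 = (\<lambda>S. w S + a * d S)"
  define lam2 where "lam2 = (\<lambda>S. w S + (- b) * d S)"
  define C1 where "C1 = {S\<in>C. lam1 S > 0}"
  define C2 where "C2 = {S\<in>C. lam2 S > 0}"
  have e1: "minimal_balanced N C1 \<and> balancing_weights N C1 lam1"
    using endpoint[OF finN co w k od nn1 S1z] unfolding C1_def lam1_def by auto
  have e2: "minimal_balanced N C2 \<and> balancing_weights N C2 lam2"
    using endpoint[OF finN co w k od nn2 S2z] unfolding C2_def lam2_def by auto
  have "S1 \<notin> C1" using S1z unfolding C1_def lam1_def by auto
  moreover have "S1 \<in> C2"
  proof -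
    have "d S1 < 0" using S1 unfolding Mn_def by auto
    hence "b * d S1 < 0" using bpos by (simp add: mult_pos_neg)
    moreover have "w S1 > 0" using wpos S1z by auto
    ultimately show ?thesis using S1z unfolding C2_def lam2_def by auto
  qed
  ultimately have ne: "C1 \<noteq> C2" by auto
  have un: "C1 \<union> C2 = C"
  proof
    show "C1 \<union> C2 \<subseteq> C" unfolding C1_def C2_def by auto
    show "C \<subseteq> C1 \<union> C2"
    proof
      fix S assume SC: "S \<in> C"
      show "S \<in> C1 \<union> C2"
      proof (rule ccontr)
        assume "S \<notin> C1 \<union> C2"
        hence "lam1 S = 0" "lam2 S = 0" using nn1 nn2 SC unfolding C1_def C2_def lam1_def lam2_def by force+
        hence "(a + b) * d S = 0" unfolding lam1_def lam2_def by (simp add: algebra_simps)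
        hence "d S = 0" using apos bpos by simp
        thus False using \<open>lam1 S = 0\<close> wpos SC unfolding lam1_def by auto
      qed
    qed
  qed
  have rk: "incidence_rank N (C1 \<union> C2) = card (C1 \<union> C2) - 1" using rank_eq[OF finN co k S0 od] un by simp
  have mu: "(\<Sum>S\<in>J. if S \<in> C1 then lam1 S else 0) = 1 + a * dJ"
  proof -
    have "(\<Sum>S\<in>J. if S \<in> C1 then lam1 S else 0) = (\<Sum>S\<in>J. lam1 S)"
      using JC nn1 by (intro sum.cong) (force simp: C1_def lam1_def)+
    also have "\<dots> = 1 + a * dJ" using wJ unfolding lam1_def dJ_def by (simp add: sum.distrib sum_distrib_left)
    finally show ?thesis .
  qed
  have nu: "(\<Sum>S\<in>J. if S \<in> C2 then lam2 S else 0) = 1 - b * dJ"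
  proof -
    have "(\<Sum>S\<in>J. if S \<in> C2 then lam2 S else 0) = (\<Sum>S\<in>J. lam2 S)"
      using JC nn2 by (intro sum.cong) (force simp: C2_def lam2_def)+
    also have "\<dots> = 1 - b * dJ" using wJ unfolding lam2_def dJ_def by (simp add: sum_subtractf flip: sum_distrib_left)
    finally show ?thesis .
  qed
  have ne2: "1 + a * dJ \<noteq> 1 - b * dJ" using apos bpos dJ by (smt (verit) mult_eq_0_iff distrib_right)
  have teq: "(1 - (1 + a * dJ)) / ((1 - b * dJ) - (1 + a * dJ)) = a / (a + b)"
  proof -
    have e: "1 - (1 + a * dJ) = - (a * dJ)" "(1 - b * dJ) - (1 + a * dJ) = - ((a + b) * dJ)"
      by (simp_all add: algebra_simps)
    have "(1 - (1 + a * dJ)) / ((1 - b * dJ) - (1 + a * dJ)) = (- (a * dJ)) / (- ((a + b) * dJ))"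
      unfolding e ..
    also have "\<dots> = (a * dJ) / ((a + b) * dJ)" by simp
    also have "\<dots> = a / (a + b)" using dJ by simp
    finally show ?thesis .
  qed
  have "0 < a / (a + b)" "a / (a + b) < 1" using apos bpos by auto
  hence "(let mu = (\<lambda>S. if S \<in> C1 then lam1 S else 0);
             nu = (\<lambda>S. if S \<in> C2 then lam2 S else 0);
             muJ = (\<Sum>S\<in>J. mu S); nuJ = (\<Sum>S\<in>J. nu S);
             t = (1 - muJ) / (nuJ - muJ)
         in muJ \<noteq> nuJ \<and> 0 < t \<and> t < 1)"
    unfolding Let_def mu nu teq using ne2 by auto
  thus ?thesis using e1 e2 ne rk un JC by blast
qed



lemma bw_cong: "(\<forall>S\<in>C. g S = h S) \<Longrightarrow> balancing_weights N C g \<longleftrightarrow> balancing_weights N C h"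
  unfolding balancing_weights_def by (auto intro!: sum.cong)

lemma min_coll: "minimal_balanced N C \<Longrightarrow> coll N C"
  unfolding minimal_balanced_def using balanced_coll by auto

lemma rev1:
  assumes finN: "finite N" and pN: "p \<notin> N" and m: "minimal_balanced N C" and lam: "balancing_weights N C lam"
    and JC: "J \<subseteq> C" and lJ: "(\<Sum>S\<in>J. lam S) = 1"
  shows "minimal_balanced (insert p N) (extend_by p C J)"
proof -
  interpret setting N p C J using finN pN min_coll[OF m] JC by unfold_locales
  have ind: "indep_columns N C" using m minimal_iff[OF finN] by auto
  define w where "w = (\<lambda>T. lam (T - {p}))"
  have wf: "\<forall>S\<in>C. w (f S) = lam S" unfolding w_def using fe_back by auto
  have "balancing_weights (insert p N) (f ` C) w"
    unfolding bwP using bw_cong[OF wf] lam lJ wf JC by (auto intro!: sum.cong simp: subset_iff)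
  hence "balanced (insert p N) (f ` C)" using coll_B unfolding balanced_def coll_def by blast
  moreover have "indep_columns (insert p N) (f ` C)" unfolding indepP using ind unfolding indep_iff by blast
  ultimately show ?thesis using minimal_iff[of "insert p N"] finN extend_fe[OF JC] by auto
qed

lemma rev2:
  assumes finN: "finite N" and pN: "p \<notin> N" and m: "minimal_balanced N C" and lam: "balancing_weights N C lam"
    and JC: "J \<subseteq> C" and lJ: "(\<Sum>S\<in>J. lam S) < 1"
  shows "minimal_balanced (insert p N) (extend_by p C J \<union> {{p}})"
proof -
  interpret setting N p C J using finN pN min_coll[OF m] JC by unfold_locales
  have ind: "indep_columns N C" using m minimal_iff[OF finN] by auto
  define w where "w = (\<lambda>T. if T = {p} then 1 - (\<Sum>S\<in>J. lam S) else lam (T - {p}))"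
  have wf: "\<forall>S\<in>C. w (f S) = lam S" unfolding w_def using fe_back notin_p by (auto simp: image_iff)
  have "(\<Sum>S\<in>J. w (f S)) = (\<Sum>S\<in>J. lam S)" using wf JC by (intro sum.cong) auto
  hence "balancing_weights (insert p N) (f ` C \<union> {{p}}) w"
    unfolding bwQ using bw_cong[OF wf] lam lJ by (auto simp: w_def)
  moreover have "coll (insert p N) (f ` C \<union> {{p}})" using coll_B unfolding coll_def by auto
  ultimately have "balanced (insert p N) (f ` C \<union> {{p}})" unfolding balanced_def coll_def by blast
  moreover have "indep_columns (insert p N) (f ` C \<union> {{p}})" using indepQ ind by auto
  ultimately show ?thesis using minimal_iff[of "insert p N"] finN extend_fe[OF JC] by auto
qed

lemma rev3:
  assumes finN: "finite N" and pN: "p \<notin> N" and m: "minimal_balanced N C" and lam: "balancing_weights N C lam"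
    and JC: "J \<subseteq> C" and d: "\<delta> \<in> C - J" and l1: "(\<Sum>S\<in>J. lam S) < 1" and l2: "(\<Sum>S\<in>J. lam S) > 1 - lam \<delta>"
  shows "minimal_balanced (insert p N) (extend_by p C J \<union> {insert p \<delta>})"
proof -
  interpret setting N p C J using finN pN min_coll[OF m] JC by unfold_locales
  have ind: "indep_columns N C" using m minimal_iff[OF finN] by auto
  have pd: "p \<notin> \<delta>" using d pS by auto
  define L where "L = (\<Sum>S\<in>J. lam S)"
  define w where "w = (\<lambda>T. if T = insert p \<delta> then 1 - L else if T = \<delta> then lam \<delta> - (1 - L) else lam (T - {p}))"
  have wf: "w (f S) = lam S - (if S = \<delta> then 1 - L else 0)" if S: "S \<in> C" for S
  proof -
    have "f S \<noteq> insert p \<delta>" using notin_ins[OF d] S by auto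
    moreover have "f S = \<delta> \<longleftrightarrow> S = \<delta>" by (rule fe_eq_delta_iff) (use d pd in auto)
    ultimately show ?thesis using S fe_back unfolding w_def by auto
  qed
  have wi: "w (insert p \<delta>) = 1 - L" unfolding w_def by auto
  have lpos: "\<forall>S\<in>C. lam S > 0" using lam unfolding balancing_weights_def by auto
  have "(\<Sum>S\<in>J. w (f S)) = L" unfolding L_def using wf JC d by (intro sum.cong) auto
  moreover have "\<forall>S\<in>C. w (f S) > 0" using wf lpos l2 unfolding L_def by auto
  moreover have "\<forall>i\<in>N. (\<Sum>S\<in>C. (w (f S) + (if S = \<delta> then w (insert p \<delta>) else 0)) * indicator S i) = 1"
  proof
    fix i assume "i \<in> N"
    have "(\<Sum>S\<in>C. (w (f S) + (if S = \<delta> then w (insert p \<delta>) else 0)) * indicator S i) = (\<Sum>S\<in>C. lam S * indicator S i)"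
      using wf wi by (intro sum.cong) auto
    thus "(\<Sum>S\<in>C. (w (f S) + (if S = \<delta> then w (insert p \<delta>) else 0)) * indicator S i) = 1"
      using lam \<open>i \<in> N\<close> unfolding balancing_weights_def by auto
  qed
  ultimately have "balancing_weights (insert p N) (f ` C \<union> {insert p \<delta>}) w"
    unfolding bwR[OF d] using wi l1 unfolding L_def by auto
  moreover have "coll (insert p N) (f ` C \<union> {insert p \<delta>})" using coll_B d co unfolding coll_def by auto
  ultimately have "balanced (insert p N) (f ` C \<union> {insert p \<delta>})" unfolding balanced_def coll_def by blast
  moreover have "indep_columns (insert p N) (f ` C \<union> {insert p \<delta>})" using indepR[OF d] ind by auto
  ultimately show ?thesis using minimal_iff[of "insert p N"] finN extend_fe[OF JC] by auto
qed



lemma rows_ext: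
  assumes "finite C" "C1 \<subseteq> C" "balancing_weights N C1 lam1" "i \<in> N"
  shows "(\<Sum>S\<in>C. (if S \<in> C1 then lam1 S else 0) * indicator S i) = 1"
proof -
  have "(\<Sum>S\<in>C. (if S \<in> C1 then lam1 S else 0) * indicator S i) = (\<Sum>S\<in>C1. lam1 S * indicator S i)"
    by (rule sum.mono_neutral_cong_right) (use assms in auto)
  thus ?thesis using assms unfolding balancing_weights_def by auto
qed

lemma rev4:
  assumes finN: "finite N" and pN: "p \<notin> N" and m1: "minimal_balanced N C1" and m2: "minimal_balanced N C2"
    and ne: "C1 \<noteq> C2" and l1: "balancing_weights N C1 lam1" and l2: "balancing_weights N C2 lam2"
    and rk: "incidence_rank N (C1 \<union> C2) = card (C1 \<union> C2) - 1" and JC: "J \<subseteq> C1 \<union> C2"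
    and lt: "(let mu = (\<lambda>S. if S \<in> C1 then lam1 S else 0);
             nu = (\<lambda>S. if S \<in> C2 then lam2 S else 0);
             muJ = (\<Sum>S\<in>J. mu S); nuJ = (\<Sum>S\<in>J. nu S);
             t = (1 - muJ) / (nuJ - muJ)
         in muJ \<noteq> nuJ \<and> 0 < t \<and> t < 1)"
  shows "minimal_balanced (insert p N) (extend_by p (C1 \<union> C2) J)"
proof -
  define C where "C = C1 \<union> C2"
  have coC: "coll N C" using min_coll[OF m1] min_coll[OF m2] unfolding C_def coll_def by auto
  interpret setting N p C J using finN pN coC JC unfolding C_def by unfold_locales
  define mu where "mu = (\<lambda>S. if S \<in> C1 then lam1 S else 0)"
  define nu where "nu = (\<lambda>S. if S \<in> C2 then lam2 S else 0)"
  define muJ where "muJ = (\<Sum>S\<in>J. mu S)"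
  define nuJ where "nuJ = (\<Sum>S\<in>J. nu S)"
  define t where "t = (1 - muJ) / (nuJ - muJ)"
  have lt': "muJ \<noteq> nuJ" "0 < t" "t < 1" using lt unfolding Let_def mu_def nu_def muJ_def nuJ_def t_def by auto
  have rmu: "\<forall>i\<in>N. (\<Sum>S\<in>C. mu S * indicator S i) = 1"
    using rows_ext[OF finC _ l1] unfolding mu_def C_def by auto
  have rnu: "\<forall>i\<in>N. (\<Sum>S\<in>C. nu S * indicator S i) = 1"
    using rows_ext[OF finC _ l2] unfolding nu_def C_def by auto
  define w where "w = (\<lambda>S. (1 - t) * mu S + t * nu S)"
  have p1: "\<forall>S\<in>C1. lam1 S > 0" "\<forall>S\<in>C2. lam2 S > 0" using l1 l2 unfolding balancing_weights_def by auto
  have munn: "mu S \<ge> 0" "nu S \<ge> 0" for S using p1 unfolding mu_def nu_def by (auto simp: less_imp_le)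
  have wpos: "\<forall>S\<in>C. w S > 0"
  proof
    fix S assume "S \<in> C"
    hence "mu S > 0 \<or> nu S > 0" using p1 unfolding C_def mu_def nu_def by auto
    thus "w S > 0" unfolding w_def using lt' munn[of S]
      by (smt (verit) mult_pos_pos mult_nonneg_nonneg)
  qed
  have wrow: "\<forall>i\<in>N. (\<Sum>S\<in>C. w S * indicator S i) = 1"
  proof
    fix i assume i: "i \<in> N"
    have "(\<Sum>S\<in>C. w S * indicator S i) = (\<Sum>S\<in>C. (1 - t) * (mu S * indicator S i) + t * (nu S * indicator S i))"
      unfolding w_def by (intro sum.cong) (auto simp: algebra_simps)
    also have "\<dots> = (1 - t) * (\<Sum>S\<in>C. mu S * indicator S i) + t * (\<Sum>S\<in>C. nu S * indicator S i)"
      by (simp add: sum.distrib sum_distrib_left)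
    finally have "(\<Sum>S\<in>C. w S * indicator S i) = (1 - t) * (\<Sum>S\<in>C. mu S * indicator S i) + t * (\<Sum>S\<in>C. nu S * indicator S i)" .
    thus "(\<Sum>S\<in>C. w S * indicator S i) = 1" using rmu rnu i by auto
  qed
  have wJ: "(\<Sum>S\<in>J. w S) = 1"
  proof -
    have "(\<Sum>S\<in>J. w S) = (1 - t) * muJ + t * nuJ"
      unfolding w_def muJ_def nuJ_def by (simp add: sum.distrib sum_distrib_left)
    also have "\<dots> = muJ + t * (nuJ - muJ)" by (simp add: algebra_simps)
    also have "t * (nuJ - muJ) = 1 - muJ" unfolding t_def using lt'(1) by simp
    finally show ?thesis by simp
  qed
  define wB where "wB = (\<lambda>T. w (T - {p}))"
  have wf: "\<forall>S\<in>C. wB (f S) = w S" unfolding wB_def using fe_back by auto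
  have bwC: "balancing_weights N C w" unfolding balancing_weights_def using wpos wrow by auto
  have "balancing_weights (insert p N) (f ` C) wB"
    unfolding bwP using bw_cong[OF wf] bwC wJ wf JC by (auto intro!: sum.cong simp: subset_iff)
  hence "balanced (insert p N) (f ` C)" using coll_B unfolding balanced_def coll_def by blast
  moreover have "indep_columns (insert p N) (f ` C)" unfolding indepP
  proof (intro allI impI)
    fix c assume a: "kerN N C c \<and> (\<Sum>S\<in>J. c S) = 0"
    define d where "d = (\<lambda>S. nu S - mu S)"
    have kd: "kerN N C d" unfolding kerN_def d_def using rmu rnu
      by (simp add: left_diff_distrib sum_subtractf)
    have dJ: "(\<Sum>S\<in>J. d S) \<noteq> 0" using lt'(1) unfolding d_def muJ_def nuJ_def by (simp add: sum_subtractf)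
    have Cne: "C \<noteq> {}" using ne unfolding C_def by auto
    obtain s where s: "\<forall>S\<in>C. c S = s * d S"
      using rank_onedim[OF finN coC _ Cne kd dJ JC] a rk unfolding C_def by auto
    have "(\<Sum>S\<in>J. c S) = s * (\<Sum>S\<in>J. d S)" using s JC by (simp add: sum_distrib_left subset_iff)
    hence "s = 0" using a dJ by simp
    thus "\<forall>S\<in>C. c S = 0" using s by simp
  qed
  ultimately show ?thesis using minimal_iff[of "insert p N"] finN extend_fe[OF JC] unfolding C_def by auto
qed



lemma fwd:
  assumes finN: "finite N" and pN: "p \<notin> N" and m: "minimal_balanced (insert p N) B"
  shows "((\<exists>C lam J. minimal_balanced N C \<and> balancing_weights N C lam \<and> J \<subseteq> C \<and>
        (\<Sum>S\<in>J. lam S) = 1 \<and> B = extend_by p C J)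
   \<or> (\<exists>C lam J. minimal_balanced N C \<and> balancing_weights N C lam \<and> J \<subseteq> C \<and>
        (\<Sum>S\<in>J. lam S) < 1 \<and> B = extend_by p C J \<union> {{p}})
   \<or> (\<exists>C lam J \<delta>. minimal_balanced N C \<and> balancing_weights N C lam \<and> J \<subseteq> C \<and>
        \<delta> \<in> C - J \<and> 1 > (\<Sum>S\<in>J. lam S) \<and> (\<Sum>S\<in>J. lam S) > 1 - lam \<delta> \<and>
        B = extend_by p C J \<union> {insert p \<delta>})
   \<or> (\<exists>C1 C2 lam1 lam2 J.
        minimal_balanced N C1 \<and> minimal_balanced N C2 \<and> C1 \<noteq> C2 \<and>
        balancing_weights N C1 lam1 \<and> balancing_weights N C2 lam2 \<and>
        incidence_rank N (C1 \<union> C2) = card (C1 \<union> C2) - 1 \<and>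
        J \<subseteq> C1 \<union> C2 \<and>
        (let mu = (\<lambda>S. if S \<in> C1 then lam1 S else 0);
             nu = (\<lambda>S. if S \<in> C2 then lam2 S else 0);
             muJ = (\<Sum>S\<in>J. mu S); nuJ = (\<Sum>S\<in>J. nu S);
             t = (1 - muJ) / (nuJ - muJ)
         in muJ \<noteq> nuJ \<and> 0 < t \<and> t < 1) \<and>
        B = extend_by p (C1 \<union> C2) J))"
  (is "?D1 \<or> ?D2 \<or> ?D3 \<or> ?D4")
proof -
  have finN': "finite (insert p N)" using finN by auto
  have bal: "balanced (insert p N) B" and ind: "indep_columns (insert p N) B"
    using m minimal_iff[OF finN'] by auto
  have coB: "coll (insert p N) B" using balanced_coll[OF bal] .
  have finB: "finite B" using coll_finite[OF finN' coB] .
  obtain w where w: "balancing_weights (insert p N) B w" using bal unfolding balanced_def by auto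
  define C where "C = (\<lambda>T. T - {p}) ` (B - {{p}})"
  define J where "J = {S\<in>C. S \<notin> B}"
  define K where "K = {T\<in>B. p \<in> T \<and> T - {p} \<in> B}"
  note dc = decomp[OF pN coB C_def J_def K_def]
  interpret setting N p C J using finN pN dc by unfold_locales
  have Bne: "\<And>T. T \<in> B \<Longrightarrow> T \<noteq> {}" using coB unfolding coll_def by auto
  have Kp: "T - {p} \<in> C - J \<and> T = insert p (T - {p}) \<and> T - {p} \<noteq> {}" if T: "T \<in> K" for T
  proof -
    have "T \<in> B" "p \<in> T" "T - {p} \<in> B" using T unfolding K_def by auto
    moreover hence "T \<noteq> {p}" using Bne by fastforce
    ultimately show ?thesis unfolding C_def J_def using Bne by auto
  qed
  have mC: "minimal_balanced N C" if "balancing_weights N C lam" "indep_columns N C" for lam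
    using that co minimal_iff[OF finN] unfolding balanced_def coll_def by blast
  show ?thesis
  proof (cases "{p} \<in> B")
    case True
    have "K = {}"
    proof (rule ccontr)
      assume "K \<noteq> {}"
      then obtain T where T: "T \<in> K" by auto
      thus False using no_pK[OF ind finB True] Kp[OF T] unfolding K_def by auto
    qed
    hence Beq: "B = f ` C \<union> {{p}}" using dc(3) True by auto
    have b: "balancing_weights N C (\<lambda>S. w (f S))" using w bwQ Beq by simp
    have ws: "w {p} + (\<Sum>S\<in>J. w (f S)) = 1" "w {p} > 0" using w bwQ Beq by auto
    have "indep_columns N C" using ind indepQ Beq by simp
    hence "?D2" using mC[OF b] b ws JC extend_fe[OF JC] Beq
      by (intro exI[of _ C] exI[of _ "\<lambda>S. w (f S)"] exI[of _ J]) auto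
    thus ?thesis by blast
  next
    case nop: False
    show ?thesis
    proof (cases "K = {}")
      case True
      hence Beq: "B = f ` C" using dc(3) nop by auto
      have b: "balancing_weights N C (\<lambda>S. w (f S))" and wJ: "(\<Sum>S\<in>J. w (f S)) = 1"
        using w bwP Beq by auto
      have aug: "\<forall>c. kerN N C c \<and> (\<Sum>S\<in>J. c S) = 0 \<longrightarrow> (\<forall>S\<in>C. c S = 0)"
        using ind indepP Beq by simp
      show ?thesis
      proof (cases "indep_columns N C")
        case True
        hence "?D1" using mC[OF b] b wJ JC extend_fe[OF JC] Beq
          by (intro exI[of _ C] exI[of _ "\<lambda>S. w (f S)"] exI[of _ J]) auto
        thus ?thesis by blast
      next
        case False
        from segment[OF finN co b JC wJ aug False] obtain C1 C2 lam1 lam2 where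
          s: "minimal_balanced N C1 \<and> minimal_balanced N C2 \<and> C1 \<noteq> C2 \<and>
        balancing_weights N C1 lam1 \<and> balancing_weights N C2 lam2 \<and>
        incidence_rank N (C1 \<union> C2) = card (C1 \<union> C2) - 1 \<and>
        J \<subseteq> C1 \<union> C2 \<and>
        (let mu = (\<lambda>S. if S \<in> C1 then lam1 S else 0);
             nu = (\<lambda>S. if S \<in> C2 then lam2 S else 0);
             muJ = (\<Sum>S\<in>J. mu S); nuJ = (\<Sum>S\<in>J. nu S);
             t = (1 - muJ) / (nuJ - muJ)
         in muJ \<noteq> nuJ \<and> 0 < t \<and> t < 1) \<and> C1 \<union> C2 = C" by blast
        have un: "C1 \<union> C2 = C" using s by (elim conjE) assumption
        have Beq2: "B = extend_by p (C1 \<union> C2) J" using Beq extend_fe[OF JC] un by simp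
        have "minimal_balanced N C1 \<and> minimal_balanced N C2 \<and> C1 \<noteq> C2 \<and>
        balancing_weights N C1 lam1 \<and> balancing_weights N C2 lam2 \<and>
        incidence_rank N (C1 \<union> C2) = card (C1 \<union> C2) - 1 \<and>
        J \<subseteq> C1 \<union> C2 \<and>
        (let mu = (\<lambda>S. if S \<in> C1 then lam1 S else 0);
             nu = (\<lambda>S. if S \<in> C2 then lam2 S else 0);
             muJ = (\<Sum>S\<in>J. mu S); nuJ = (\<Sum>S\<in>J. nu S);
             t = (1 - muJ) / (nuJ - muJ)
         in muJ \<noteq> nuJ \<and> 0 < t \<and> t < 1) \<and>
        B = extend_by p (C1 \<union> C2) J" using s Beq2 by (elim conjE) (intro conjI)
        hence "?D4" by (intro exI[of _ C1] exI[of _ C2] exI[of _ lam1] exI[of _ lam2] exI[of _ J])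
        thus ?thesis by blast
      qed
    next
      case False
      then obtain T where T: "T \<in> K" by auto
      have KT: "K = {T}"
      proof -
        have "T' = T" if "T' \<in> K" for T'
          by (rule no_KK[OF ind finB, of T' p T]) (use that T in \<open>simp_all add: K_def\<close>)
        thus ?thesis using T by blast
      qed
      define \<delta> where "\<delta> = T - {p}"
      have d: "\<delta> \<in> C - J" and Td: "T = insert p \<delta>" using Kp[OF T] unfolding \<delta>_def by auto
      have pd: "p \<notin> \<delta>" using d pS by auto
      have fd: "f \<delta> = \<delta>" by (rule fe_eq_delta) (use d pd in auto)
      have Beq: "B = f ` C \<union> {insert p \<delta>}" using dc(3) nop KT Td by auto
      have wB: "(\<forall>S\<in>C. w (f S) > 0) \<and> w (insert p \<delta>) > 0 \<and>
       (\<forall>i\<in>N. (\<Sum>S\<in>C. (w (f S) + (if S = \<delta> then w (insert p \<delta>) else 0)) * indicator S i) = 1) \<and>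
       w (insert p \<delta>) + (\<Sum>S\<in>J. w (f S)) = 1" using w bwR[OF d] Beq by simp
      define lam where "lam = (\<lambda>S. w (f S) + (if S = \<delta> then w (insert p \<delta>) else 0))"
      have b: "balancing_weights N C lam" unfolding balancing_weights_def lam_def
        using wB by (auto simp: add_pos_pos)
      have lJ: "(\<Sum>S\<in>J. lam S) = (\<Sum>S\<in>J. w (f S))" unfolding lam_def using d by (intro sum.cong) auto
      have ld: "lam \<delta> = w \<delta> + w (insert p \<delta>)" unfolding lam_def using fd by simp
      have wd: "w \<delta> > 0" using wB d fd by force
      have "indep_columns N C" using ind indepR[OF d] Beq by simp
      hence "?D3" using mC[OF b] b JC d lJ ld wd wB extend_fe[OF JC] Beq
        by (intro exI[of _ C] exI[of _ lam] exI[of _ J] exI[of _ \<delta>]) auto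
      thus ?thesis by blast
    qed
  qed
qed


theorem theorem4p5:
  fixes N :: "'a set" and p :: 'a and B :: "'a set set"
  assumes "finite N" and "N \<noteq> {}" and "p \<notin> N"
  shows "minimal_balanced (insert p N) B \<longleftrightarrow>
    ((\<exists>C lam J. minimal_balanced N C \<and> balancing_weights N C lam \<and> J \<subseteq> C \<and>
        (\<Sum>S\<in>J. lam S) = 1 \<and> B = extend_by p C J)
   \<or> (\<exists>C lam J. minimal_balanced N C \<and> balancing_weights N C lam \<and> J \<subseteq> C \<and>
        (\<Sum>S\<in>J. lam S) < 1 \<and> B = extend_by p C J \<union> {{p}})
   \<or> (\<exists>C lam J \<delta>. minimal_balanced N C \<and> balancing_weights N C lam \<and> J \<subseteq> C \<and>
        \<delta> \<in> C - J \<and> 1 > (\<Sum>S\<in>J. lam S) \<and> (\<Sum>S\<in>J. lam S) > 1 - lam \<delta> \<and>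
        B = extend_by p C J \<union> {insert p \<delta>})
   \<or> (\<exists>C1 C2 lam1 lam2 J.
        minimal_balanced N C1 \<and> minimal_balanced N C2 \<and> C1 \<noteq> C2 \<and>
        balancing_weights N C1 lam1 \<and> balancing_weights N C2 lam2 \<and>
        incidence_rank N (C1 \<union> C2) = card (C1 \<union> C2) - 1 \<and>
        J \<subseteq> C1 \<union> C2 \<and>
        (let mu = (\<lambda>S. if S \<in> C1 then lam1 S else 0);
             nu = (\<lambda>S. if S \<in> C2 then lam2 S else 0);
             muJ = (\<Sum>S\<in>J. mu S); nuJ = (\<Sum>S\<in>J. nu S);
             t = (1 - muJ) / (nuJ - muJ)
         in muJ \<noteq> nuJ \<and> 0 < t \<and> t < 1) \<and>
        B = extend_by p (C1 \<union> C2) J))" (is "_ \<longleftrightarrow> ?rhs")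
proof
  assume "minimal_balanced (insert p N) B"
  thus "?rhs" by (rule fwd[OF assms(1) assms(3)])
next
  assume R: "?rhs"
  show "minimal_balanced (insert p N) B"
    using R
  proof (elim disjE exE conjE)
    fix C lam J assume "minimal_balanced N C" "balancing_weights N C lam" "J \<subseteq> C"
      "(\<Sum>S\<in>J. lam S) = 1" and Beq: "B = extend_by p C J"
    thus ?thesis using rev1[OF assms(1) assms(3)] by simp
  next
    fix C lam J assume "minimal_balanced N C" "balancing_weights N C lam" "J \<subseteq> C"
      "(\<Sum>S\<in>J. lam S) < 1" and Beq: "B = extend_by p C J \<union> {{p}}"
    thus ?thesis using rev2[OF assms(1) assms(3)] by simp
  next
    fix C lam J \<delta> assume "minimal_balanced N C" "balancing_weights N C lam" "J \<subseteq> C"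
      "\<delta> \<in> C - J" "1 > (\<Sum>S\<in>J. lam S)" "(\<Sum>S\<in>J. lam S) > 1 - lam \<delta>"
      and Beq: "B = extend_by p C J \<union> {insert p \<delta>}"
    thus ?thesis using rev3[OF assms(1) assms(3)] by simp
  next
    fix C1 C2 lam1 lam2 J
    assume m1: "minimal_balanced N C1" and m2: "minimal_balanced N C2" and ne: "C1 \<noteq> C2"
      and l1: "balancing_weights N C1 lam1" and l2: "balancing_weights N C2 lam2"
      and rk: "incidence_rank N (C1 \<union> C2) = card (C1 \<union> C2) - 1"
      and JC: "J \<subseteq> C1 \<union> C2"
      and lt: "(let mu = (\<lambda>S. if S \<in> C1 then lam1 S else 0);
             nu = (\<lambda>S. if S \<in> C2 then lam2 S else 0);
             muJ = (\<Sum>S\<in>J. mu S); nuJ = (\<Sum>S\<in>J. nu S);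
             t = (1 - muJ) / (nuJ - muJ)
         in muJ \<noteq> nuJ \<and> 0 < t \<and> t < 1)"
      and Beq: "B = extend_by p (C1 \<union> C2) J"
    show ?thesis unfolding Beq by (rule rev4[OF assms(1) assms(3) m1 m2 ne l1 l2 rk JC lt])
  qed
qed

end
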